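(* Let $k\geq 2$ and let $H$ be a complete $k$-partite graph of order $mk$ (so $m=|H|/k$). Let $\beta,M,\Delta\geq 1$ satisfy $M\geq 60\beta\geq 240\Delta$, $M\geq 10\beta\Delta$, $M\geq 4k$ and $\beta\geq 10\log k$. Let $G$ be a graph such that $\overline{G}$ is $H$-free and $|G|\geq Mmk\log k$. Then there exist a subgraph $H'\sqsubseteq H$ induced by some collection of at least two parts of $H$, and an induced subgraph $F\subseteq G$, such that: (1) $\overline{F}$ is $H'$-free; (2) $M|H'|\log\chi(H')-m(H')\leq |F|\leq M|H'|\log\chi(H')$; (3) $F$ is $(\Delta,\beta,m(H'),\chi(H'))$-expanding.
   Context: All logarithms are natural. For a graph $G$, $|G|$ is its number of vertices and $\overline{G}$ its complement; "$\overline{G}$ is $H$-free" means $\overline{G}$ contains no copy of $H$. For a complete multipartite graph $H$, $H'\sqsubseteq H$ means $H'$ is the subgraph of $H$ induced by the union of some (not necessarily proper) subcollection of the parts of $H$. For a graph $H'$, $m(H')=|H'|/\chi(H')$. For a vertex set $S\subseteq V(G)$, the external neighbourhood is $N_G(S)=\{w\in V(G)\setminus S: vw\in E(G)\text{ for some }v\in S\}$. A graph $G$ $(\Delta,\beta,d,k)$-expands into a set $W\subseteq V(G)$ if (a) $|N_G(S)\cap W|\geq\Delta|S|$ for every $S\subseteq V(G)$ with $|S|\leq\beta d$, and (b) $|N_G(S)|\geq |S|/(10\log k)$ for every $S\subseteq V(G)$ with $\beta d\leq|S|\leq|G|/2$. "$G$ is $(\Delta,\beta,d,k)$-expanding" means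 $G$ $(\Delta,\beta,d,k)$-expands into $W=V(G)$. *)

theory Defs
  imports Complex_Main
begin

definition graph :: "'a set \<Rightarrow> ('a \<Rightarrow> 'a \<Rightarrow> bool) \<Rightarrow> bool" where
  "graph V E \<longleftrightarrow> finite V \<and> (\<forall>x y. E x y \<longrightarrow> x \<in> V \<and> y \<in> V \<and> x \<noteq> y \<and> E y x)"

definition compl_edges :: "'a set \<Rightarrow> ('a \<Rightarrow> 'a \<Rightarrow> bool) \<Rightarrow> 'a \<Rightarrow> 'a \<Rightarrow> bool" where
  "compl_edges V E x y \<longleftrightarrow> x \<in> V \<and> y \<in> V \<and> x \<noteq> y \<and> \<not> E x y"

definition induced_edges :: "'a set \<Rightarrow> ('a \<Rightarrow> 'a \<Rightarrow> bool) \<Rightarrow> 'a \<Rightarrow> 'a \<Rightarrow> bool" where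
  "induced_edges U E x y \<longleftrightarrow> x \<in> U \<and> y \<in> U \<and> E x y"

definition contains_copy ::
  "'a set \<Rightarrow> ('a \<Rightarrow> 'a \<Rightarrow> bool) \<Rightarrow> 'b set \<Rightarrow> ('b \<Rightarrow> 'b \<Rightarrow> bool) \<Rightarrow> bool" where
  "contains_copy V E VH EH \<longleftrightarrow>
     (\<exists>f. inj_on f VH \<and> f ` VH \<subseteq> V \<and> (\<forall>x\<in>VH. \<forall>y\<in>VH. EH x y \<longrightarrow> E (f x) (f y)))"

definition H_free ::
  "'a set \<Rightarrow> ('a \<Rightarrow> 'a \<Rightarrow> bool) \<Rightarrow> 'b set \<Rightarrow> ('b \<Rightarrow> 'b \<Rightarrow> bool) \<Rightarrow> bool" where
  "H_free V E VH EH \<longleftrightarrow> \<not> contains_copy V E VH EH"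

definition chromatic_number :: "'a set \<Rightarrow> ('a \<Rightarrow> 'a \<Rightarrow> bool) \<Rightarrow> nat" where
  "chromatic_number V E = (LEAST c. \<exists>col :: 'a \<Rightarrow> nat. (\<forall>v\<in>V. col v < c) \<and>
       (\<forall>x\<in>V. \<forall>y\<in>V. E x y \<longrightarrow> col x \<noteq> col y))"

definition mratio :: "'a set \<Rightarrow> ('a \<Rightarrow> 'a \<Rightarrow> bool) \<Rightarrow> real" where
  "mratio V E = real (card V) / real (chromatic_number V E)"

definition complete_multipartite :: "'a set \<Rightarrow> ('a \<Rightarrow> 'a \<Rightarrow> bool) \<Rightarrow> 'a set set \<Rightarrow> bool" where
  "complete_multipartite V E P \<longleftrightarrow> finite P \<and> V = \<Union>P \<and> {} \<notin> P \<and>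
     (\<forall>A\<in>P. \<forall>B\<in>P. A \<noteq> B \<longrightarrow> A \<inter> B = {}) \<and>
     (\<forall>x y. E x y \<longleftrightarrow> (x \<in> V \<and> y \<in> V \<and> (\<forall>A\<in>P. \<not> (x \<in> A \<and> y \<in> A))))"

definition ext_nbhd :: "'a set \<Rightarrow> ('a \<Rightarrow> 'a \<Rightarrow> bool) \<Rightarrow> 'a set \<Rightarrow> 'a set" where
  "ext_nbhd V E S = {w \<in> V - S. \<exists>v\<in>S. E v w}"

definition expands_into ::
  "'a set \<Rightarrow> ('a \<Rightarrow> 'a \<Rightarrow> bool) \<Rightarrow> real \<Rightarrow> real \<Rightarrow> real \<Rightarrow> nat \<Rightarrow> 'a set \<Rightarrow> bool" where
  "expands_into V E \<Delta> \<beta> d k W \<longleftrightarrow>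
     (\<forall>S. S \<subseteq> V \<and> real (card S) \<le> \<beta> * d \<longrightarrow>
          real (card (ext_nbhd V E S \<inter> W)) \<ge> \<Delta> * real (card S)) \<and>
     (\<forall>S. S \<subseteq> V \<and> \<beta> * d \<le> real (card S) \<and> real (card S) \<le> real (card V) / 2 \<longrightarrow>
          real (card (ext_nbhd V E S)) \<ge> real (card S) / (10 * ln (real k)))"

definition expanding ::
  "'a set \<Rightarrow> ('a \<Rightarrow> 'a \<Rightarrow> bool) \<Rightarrow> real \<Rightarrow> real \<Rightarrow> real \<Rightarrow> nat \<Rightarrow> bool" where
  "expanding V E \<Delta> \<beta> d k \<longleftrightarrow> expands_into V E \<Delta> \<beta> d k V"

end

theory Submission
  imports Defs
begin

lemma ln_lower: "0 < (x::real) \<Longrightarrow> 1 - 1/x \<le> ln x"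
proof -
  assume x: "0 < x"
  have "ln (1/x) \<le> 1/x - 1" using x by (intro ln_le_minus_one) simp
  thus ?thesis using x by (simp add: ln_div)
qed

lemma mono_xln:
  fixes j :: real assumes j: "j \<ge> 0" and ab: "0 < a" "a \<le> b"
  shows "a * (ln (j + a) - ln a) \<le> b * (ln (j + b) - ln b)"
proof (rule DERIV_nonneg_imp_increasing_open[OF ab(2)])
  fix x assume x: "a < x" "x < b"
  hence xp: "0 < x" "0 < j + x" using ab j by auto
  have "DERIV (\<lambda>x. x * (ln (j + x) - ln x)) x :> 1 * (ln (j + x) - ln x) + x * (1/(j+x) - 1/x)"
    using xp by (auto intro!: derivative_eq_intros)
  moreover have "1 * (ln (j + x) - ln x) + x * (1/(j+x) - 1/x) \<ge> 0"
  proof -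
    have "ln (j + x) - ln x = ln ((j+x)/x)" using xp by (simp add: ln_div)
    also have "\<dots> \<ge> 1 - 1/((j+x)/x)" using xp by (intro ln_lower) simp
    also have "1 - 1/((j+x)/x) = 1 - x/(j+x)" using xp by simp
    finally have "ln (j + x) - ln x \<ge> 1 - x/(j+x)" .
    moreover have "x * (1/(j+x) - 1/x) = x/(j+x) - 1" using xp by (simp add: right_diff_distrib)
    ultimately show ?thesis by simp
  qed
  ultimately show "\<exists>y. DERIV (\<lambda>x. x * (ln (j + x) - ln x)) x :> y \<and> y \<ge> 0" by blast
next
  show "continuous_on {a..b} (\<lambda>x. x * (ln (j + x) - ln x))"
    using ab j by (intro continuous_intros) auto
qed

lemma C1:
  fixes j r :: nat assumes j: "j \<ge> 1" and r: "r \<ge> 2"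
  shows "real r * ln (real (j + r) / real r) - (1 + 1 / (10 * ln (real (j + r)))) * ln (real j + 1) \<ge> 1/240"
proof -
  have "2 * (ln (real j + 2) - ln 2) \<le> real r * (ln (real j + real r) - ln (real r))"
    using mono_xln[of "real j" 2 "real r"] r by simp
  hence m: "2 * ln ((real j + 2)/2) \<le> real r * ln (real (j + r) / real r)"
    using r by (simp add: ln_div)
  have lj: "0 \<le> ln (real j + 1)" by simp
  have l2: "ln (real j + 2) > 0" by simp
  have "ln (real j + 2) \<le> ln (real (j + r))" using r by simp
  moreover have lr: "ln (real (j + r)) > 0" using r by simp
  ultimately have e: "ln (real j + 1) / (10 * ln (real (j + r))) \<le> ln (real j + 1) / (10 * ln (real j + 2))"
    using lj l2 \<open>ln (real j + 2) \<le> ln (real (j + r))\<close> by (intro divide_left_mono) (use l2 lr in \<open>auto intro!: mult_pos_pos\<close>)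
  have key: "2 * ln ((real j + 2)/2) - ln (real j + 1) - ln (real j + 1) / (10 * ln (real j + 2)) \<ge> 1/240"
  proof (cases "j = 1")
    case True
    have a: "2 * ln ((real j + 2)/2) - ln (real j + 1) = ln (9/8)"
    proof -
      have "ln (9::real) = ln (3^2)" by simp
      also have "\<dots> = 2 * ln 3" by (subst ln_realpow) auto
      finally have 9: "ln (9::real) = 2 * ln 3" .
      have "ln (8::real) = ln (2^3)" by simp
      also have "\<dots> = 3 * ln 2" by (subst ln_realpow) auto
      finally have 8: "ln (8::real) = 3 * ln 2" .
      show ?thesis using True 9 8 by (simp add: ln_div)
    qed
    have b: "ln (9/8::real) \<ge> 1/9" using ln_lower[of "9/8"] by simp
    have "10 * ln (2::real) \<le> 7 * ln 3"
    proof -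
      have "ln (1024::real) \<le> ln 2187" by simp
      moreover have "ln ((2::real)^10) = 10 * ln 2" by (subst ln_realpow) auto
      moreover have "ln ((3::real)^7) = 7 * ln 3" by (subst ln_realpow) auto
      ultimately show ?thesis by (simp del: ln_le_cancel_iff)
    qed
    hence "ln (2::real) / (10 * ln 3) \<le> 7/100"
      by (simp add: divide_le_eq)
    thus ?thesis using a b True by simp
  next
    case False
    hence j2: "j \<ge> 2" using j by simp
    have "2 * ln ((real j + 2)/2) - ln (real j + 1) = ln (((real j + 2)/2)^2 / (real j + 1))"
      by (simp add: ln_div ln_realpow)
    also have "\<dots> \<ge> 1 - 1 / (((real j + 2)/2)^2 / (real j + 1))" by (intro ln_lower) simp
    finally have A: "2 * ln ((real j + 2)/2) - ln (real j + 1) \<ge> 1 - 4 * (real j + 1) / (real j + 2)^2"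
      by (simp add: power_divide)
    have "4 * (real j + 1) / (real j + 2)^2 \<le> 3/4"
    proof -
      have "16 * (real j + 1) \<le> 3 * (real j + 2)^2"
      proof -
      obtain i where ji: "j = i + 2" using j2 by (metis add.commute le_Suc_ex)
      have "16 * (j + 1) \<le> 3 * (j + 2)^2" unfolding ji by (simp add: power2_eq_square algebra_simps)
      hence "real (16 * (j + 1)) \<le> real (3 * (j + 2)^2)" by (simp only: of_nat_le_iff)
      thus "16 * (real j + 1) \<le> 3 * (real j + 2)^2" by (simp add: algebra_simps)
      qed
      thus ?thesis by (simp add: divide_le_eq)
    qed
    moreover have "ln (real j + 1) / (10 * ln (real j + 2)) \<le> 1/10"
      using lj l2 by (simp add: divide_le_eq)
    ultimately show ?thesis using A by linarith
  qed
  show ?thesis using m e key by (simp add: algebra_simps)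
qed

lemma ln_nat_le: "r \<ge> 1 \<Longrightarrow> ln (real r) \<le> (real r - 1) * ln 2"
proof -
  assume r: "r \<ge> 1"
  have "r - 1 < 2 ^ (r - 1)" by (rule less_exp)
  hence "r \<le> 2 ^ (r - 1)" using r by linarith
  hence "real r \<le> 2 ^ (r - 1)" by (metis of_nat_le_iff of_nat_numeral of_nat_power)
  hence "ln (real r) \<le> ln (2 ^ (r - 1))" using r by simp
  also have "\<dots> = real (r - 1) * ln 2" by (subst ln_realpow) auto
  finally show ?thesis using r by (simp add: of_nat_diff)
qed

lemma NUMB:
  fixes j r :: nat and M p b R d s F :: real
  assumes j: "j \<ge> 1" and r: "r \<ge> 2" and M: "M \<ge> 240" and p: "p \<ge> 0" and b: "b \<ge> 0"
    and bR: "real r * b \<le> R" and d: "d \<ge> 0" and dR: "d * real r \<le> R"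
    and F: "F \<ge> M * (p + R) * ln (real (j + r)) - d"
    and sF: "s \<le> F / 2" and sX: "s < M * (p + b) * ln (real j + 1)"
  shows "F - (1 + 1 / (10 * ln (real (j + r)))) * s \<ge> M * R * ln (real r)"
proof -
  define L where "L = ln (real (j + r))"
  define lj where "lj = ln (real j + 1)"
  define e where "e = 1 / (10 * L)"
  have rpos: "real r > 0" using r by simp
  have L2: "L \<ge> ln 2" unfolding L_def using j r by simp
  have ln2: "ln (2::real) \<ge> 1/2" using ln_lower[of 2] by simp
  have Lpos: "L > 0" using L2 ln2 by linarith
  have eL: "e * L = 1/10" unfolding e_def using Lpos by simp
  have e0: "e \<ge> 0" unfolding e_def using Lpos by simp
  have e1: "e \<le> 1" unfolding e_def using Lpos L2 ln2 by (simp add: divide_le_eq)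
  have lj0: "lj \<ge> 0" unfolding lj_def by simp
  have ljL: "lj \<le> L" unfolding lj_def L_def using r by simp
  have R0: "R \<ge> 0" using bR b rpos by (meson mult_nonneg_nonneg of_nat_0_le_iff order_trans)
  have bR': "b \<le> R / real r" using bR rpos by (simp add: field_simps)
  have dM: "d \<le> M * R / (240 * real r)"
  proof -
    have "d \<le> R / real r" using dR rpos by (simp add: field_simps)
    also have "\<dots> \<le> M * R / (240 * real r)"
    proof -
      have "240 * R \<le> M * R" using M R0 by (intro mult_right_mono) auto
      hence "(240 * R) / (240 * real r) \<le> (M * R) / (240 * real r)" using rpos by (intro divide_right_mono) auto
      thus ?thesis by simp
    qed
    finally show ?thesis .
  qed
  have blj: "b * lj \<le> (R / real r) * lj" using bR' lj0 by (rule mult_right_mono)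
  show ?thesis
  proof (cases "j + r < 5 * r")
    case True
    have rc: "real r - 1 \<ge> real (j + r) / 10" using True r by simp
    have cpos: "real (j + r) > 0" using r by simp
    have q1: "ln (real (j + r) / (real j + 1)) \<ge> 1 - 1 / (real (j + r) / (real j + 1))"
      using cpos by (intro ln_lower) simp
    have q2: "1 - 1 / (real (j + r) / (real j + 1)) = (real r - 1) / real (j + r)"
      using cpos by (simp add: field_simps)
    have q3: "(real r - 1) / real (j + r) \<ge> 1/10" using rc cpos by (simp add: field_simps)
    have "ln (real (j + r) / (real j + 1)) = L - lj" unfolding L_def lj_def using cpos by (simp add: ln_div)
    hence lnq: "L - lj \<ge> 1/10" using q1 q2 q3 by linarith
    have "e * lj \<le> e * L" using ljL e0 by (rule mult_left_mono)
    hence alpha: "(1 + e) * lj \<le> L" using eL lnq by (simp add: algebra_simps)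
    have C: "real r * (L - ln (real r)) - (1 + e) * lj \<ge> 1/240"
      using C1[OF j r] unfolding L_def lj_def e_def using cpos rpos by (simp add: ln_div)
    have A1: "F - (1 + e) * s \<ge> F - (1 + e) * (M * (p + b) * lj)"
      using sX e0 unfolding lj_def by (intro diff_left_mono mult_left_mono) auto
    have A2: "F - (1 + e) * (M * (p + b) * lj) \<ge> M * p * (L - (1 + e) * lj) + M * (R * L - (1 + e) * b * lj) - d"
      using F unfolding L_def by (simp add: algebra_simps)
    have A3: "M * p * (L - (1 + e) * lj) \<ge> 0" using M p alpha by simp
    have A4: "M * (R * L - (1 + e) * b * lj) \<ge> M * (R * L - (1 + e) * (R / real r) * lj)"
    proof -
      have "(1 + e) * (b * lj) \<le> (1 + e) * ((R / real r) * lj)" using blj e0 by (intro mult_left_mono) auto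
      hence "R * L - (1 + e) * (R / real r) * lj \<le> R * L - (1 + e) * b * lj" by (simp add: algebra_simps)
      thus ?thesis using M by (intro mult_left_mono) auto
    qed
    have A5: "M * (R * L - (1 + e) * (R / real r) * lj) = M * (R / real r) * (real r * (L - ln (real r)) - (1 + e) * lj) + M * R * ln (real r)"
      using rpos by (simp add: field_simps)
    have A6: "M * (R / real r) * (real r * (L - ln (real r)) - (1 + e) * lj) \<ge> M * (R / real r) * (1/240)"
      using C M R0 rpos by (intro mult_left_mono) auto
    have A7: "M * (R / real r) * (1/240) \<ge> d" using dM by (simp add: field_simps)
    show ?thesis unfolding e_def[symmetric] L_def[symmetric] using A1 A2 A3 A4 A5 A6 A7 by linarith
  next
    case False
    have "ln (5 * real r) \<le> L" unfolding L_def using False rpos by simp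
    hence L5: "L \<ge> ln 5 + ln (real r)" using rpos by (simp add: ln_mult)
    have l52: "ln 5 - ln (2::real) \<ge> 3/5"
    proof -
      have "ln (5/2::real) \<ge> 1 - 1/(5/2)" by (intro ln_lower) simp
      thus ?thesis by (simp add: ln_div)
    qed
    have lr: "ln (real r) \<le> (real r - 1) * ln 2" using ln_nat_le r by simp
    have key: "(real r - 1) * L \<ge> real r * ln (real r) + real r / 10 + 1/240"
    proof -
      have "(real r - 1) * L \<ge> (real r - 1) * (ln 5 + ln (real r))"
        using L5 r by (intro mult_left_mono) auto
      moreover have "(real r - 1) * (ln 5 - ln 2) \<ge> (real r - 1) * (3/5)"
        using l52 r by (intro mult_left_mono) auto
      ultimately have "real r * L - L \<ge> real r * ln 5 + real r * ln (real r) - ln 5 - ln (real r)"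
        "real r * ln 5 - ln 5 - real r * ln 2 + ln 2 \<ge> real r * (3/5) - 3/5"
        by (simp_all add: algebra_simps diff_divide_distrib)
      moreover have "real r \<ge> 2" using r by simp
      moreover have "ln (real r) \<le> real r * ln 2 - ln 2" using lr by (simp add: algebra_simps)
      ultimately have "real r * L - L \<ge> real r * ln (real r) + real r / 10 + 1/240" by linarith
      thus ?thesis by (simp add: algebra_simps)
    qed
    have s1: "(1 + e) * s \<le> (1 - e) * (M * (p + b) * lj) + e * F"
    proof -
      have "(1 - e) * s \<le> (1 - e) * (M * (p + b) * lj)" using sX e1 unfolding lj_def
        by (intro mult_left_mono) auto
      moreover have "2 * e * s \<le> e * F"
      proof -
        have "2 * s \<le> F" using sF by simp
        hence "e * (2 * s) \<le> e * F" using e0 by (intro mult_left_mono) auto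
        thus ?thesis by (simp add: algebra_simps)
      qed
      ultimately show ?thesis by (simp add: algebra_simps)
    qed
    define Z where "Z = M * R * L - M * (R / real r) * L - d"
    have "F - M * (p + b) * lj \<ge> Z"
    proof -
      have "M * p * lj \<le> M * p * L" using ljL M p by (intro mult_left_mono) auto
      moreover have "M * (b * lj) \<le> M * ((R / real r) * L)"
      proof -
        have "(R / real r) * lj \<le> (R / real r) * L" using ljL R0 rpos by (intro mult_left_mono) auto
        hence "b * lj \<le> (R / real r) * L" using blj by linarith
        thus ?thesis using M by (intro mult_left_mono) auto
      qed
      ultimately show ?thesis using F unfolding Z_def L_def by (simp add: algebra_simps)
    qed
    hence "(1 - e) * Z \<le> (1 - e) * (F - M * (p + b) * lj)" using e1 by (intro mult_left_mono) auto
    moreover have "(1 - e) * (F - M * (p + b) * lj) = F - e * F - (1 - e) * (M * (p + b) * lj)"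
      by (simp add: algebra_simps)
    ultimately have "F - (1 + e) * s \<ge> (1 - e) * Z" using s1 by linarith
    moreover have "(1 - e) * Z \<ge> M * R * L - M * R / 10 - M * (R / real r) * L - d"
    proof -
      have "e * (M * (R / real r) * L + d) \<ge> 0" using e0 M R0 rpos Lpos d by simp
      moreover have "e * (M * R * L) = M * R / 10"
      proof -
        have "e * (M * R * L) = M * R * (e * L)" by (simp add: algebra_simps)
        thus ?thesis using eL by simp
      qed
      moreover have "(1 - e) * Z = Z - e * (M * R * L) + e * (M * (R / real r) * L + d)"
        unfolding Z_def by (simp add: algebra_simps diff_divide_distrib add_divide_distrib)
      ultimately show ?thesis unfolding Z_def by linarith
    qed
    moreover have "M * R * L - M * R / 10 - M * (R / real r) * L - d \<ge> M * R * ln (real r)"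
    proof -
      have "M * R * L - M * R / 10 - M * (R / real r) * L - M * R / (240 * real r)
          = M * (R / real r) * ((real r - 1) * L - real r / 10 - 1/240)"
        using rpos by (simp add: field_simps)
      also have "\<dots> \<ge> M * (R / real r) * (real r * ln (real r))"
        using key M R0 rpos by (intro mult_left_mono) auto
      also have "M * (R / real r) * (real r * ln (real r)) = M * R * ln (real r)" using rpos by simp
      finally show ?thesis using dM by linarith
    qed
    ultimately show ?thesis unfolding e_def L_def by linarith
  qed
qed


lemma NUM1:
  fixes M h d F s L :: real
  assumes M: "M \<ge> 240" and h: "h \<ge> 0" and dh: "d \<le> h" and L: "L \<ge> ln 2"
    and F: "F \<ge> M * h * L - d" and sF: "s \<le> F / 2" and s0: "s \<ge> 0"
  shows "F - (1 + 1 / (10 * L)) * s \<ge> h"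
proof -
  have ln2: "ln (2::real) \<ge> 1/2" using ln_lower[of 2] by simp
  have Lp: "L \<ge> 1/2" using L ln2 by linarith
  define e where "e = 1 / (10 * L)"
  have e0: "e \<ge> 0" and e1: "e \<le> 1/5" unfolding e_def using Lp by (auto simp: divide_le_eq)
  have "(1 + e) * s \<le> (1 + e) * (F / 2)" using sF e0 by (intro mult_left_mono) auto
  also have "\<dots> \<le> (6/5) * (F / 2)" using e1 sF s0 by (intro mult_right_mono) auto
  finally have A: "(1 + e) * s \<le> 3/5 * F" by simp
  have "M * h * L \<ge> 240 * h * (1/2)" using M h Lp by (intro mult_mono) auto
  hence "F \<ge> 119 * h" using F dh by linarith
  hence "F - (1 + e) * s \<ge> h" using A h by linarith
  thus ?thesis unfolding e_def .
qed

lemma NUMA: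
  fixes c :: nat and M \<beta> \<Delta> d h a0 n0 z :: real
  assumes c: "c \<ge> 2" and b1: "\<beta> \<ge> 1" and D1: "\<Delta> \<ge> 1" and Mb: "M \<ge> 60 * \<beta>" and bD: "60 * \<beta> \<ge> 240 * \<Delta>"
    and MbD: "M \<ge> 10 * \<beta> * \<Delta>" and d1: "d \<ge> 1" and hd: "h = real c * d" and a0: "a0 \<ge> 0"
    and n0: "n0 > M * h * ln (real c) - 1" and z0: "z \<ge> 0" and z: "z \<le> (1 + \<beta>) * d"
  shows "c \<ge> 3 \<Longrightarrow> n0 - (1 + \<Delta>) * z \<ge> M * (h - a0) * ln (real c - 1)"
    and "c = 2 \<Longrightarrow> n0 - (1 + \<Delta>) * z \<ge> h"
proof -
  have M240: "M \<ge> 240" using Mb bD D1 by linarith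
  have K: "(1 + \<Delta>) * (1 + \<beta>) \<le> M / 8"
  proof -
    have "(1 + \<Delta>) * (1 + \<beta>) = 1 + \<Delta> + \<beta> + \<beta> * \<Delta>" by (simp add: algebra_simps)
    thus ?thesis using Mb bD D1 MbD by linarith
  qed
  have "(1 + \<Delta>) * z \<le> (1 + \<Delta>) * ((1 + \<beta>) * d)" using z D1 by (intro mult_left_mono) auto
  also have "\<dots> = ((1 + \<Delta>) * (1 + \<beta>)) * d" by simp
  also have "\<dots> \<le> (M / 8) * d" using K d1 by (intro mult_right_mono) auto
  finally have Z: "(1 + \<Delta>) * z \<le> M * d / 8" by simp
  have cpos: "real c > 0" using c by simp
  have h0: "h \<ge> 0" using hd d1 by simp
  {
    assume c3: "c \<ge> 3"
    have cm1: "real c - 1 > 0" using c3 by simp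
    have "ln (real c) - ln (real c - 1) = ln (real c / (real c - 1))" using cm1 cpos by (simp add: ln_div)
    also have "\<dots> \<ge> 1 - 1 / (real c / (real c - 1))" using cm1 cpos by (intro ln_lower) simp
    also have "1 - 1 / (real c / (real c - 1)) = 1 / real c" using cpos cm1 by (simp add: field_simps)
    finally have lnd: "ln (real c) - ln (real c - 1) \<ge> 1 / real c" .
    have "M * h * (ln (real c) - ln (real c - 1)) \<ge> M * h * (1 / real c)"
      using lnd M240 h0 by (intro mult_left_mono) auto
    moreover have "M * h * (1 / real c) = M * d" using hd cpos by simp
    ultimately have A: "M * h * ln (real c) \<ge> M * h * ln (real c - 1) + M * d" by (simp add: algebra_simps)
    have B: "M * (h - a0) * ln (real c - 1) \<le> M * h * ln (real c - 1)"
    proof -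
      have "ln (real c - 1) \<ge> 0" using c3 by simp
      moreover have "M * (h - a0) \<le> M * h" using a0 M240 by (simp add: algebra_simps)
      ultimately show ?thesis by (intro mult_right_mono) auto
    qed
    have "M * d \<ge> M * 1" using M240 d1 by (intro mult_left_mono) auto
    hence "M * d \<ge> 240" using M240 by linarith
    thus "n0 - (1 + \<Delta>) * z \<ge> M * (h - a0) * ln (real c - 1)" using A B Z n0 by linarith
  }
  {
    assume c2: "c = 2"
    have ln2: "ln (2::real) \<ge> 1/2" using ln_lower[of 2] by simp
    have "M * h * ln (real c) \<ge> M * h * (1/2)" using c2 ln2 M240 h0 by (intro mult_left_mono) auto
    moreover have "M * d = M * h / 2" using hd c2 by simp
    moreover have "M * h \<ge> 240 * h" using M240 h0 by (intro mult_right_mono) auto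
    moreover have "h \<ge> 2" using hd c2 d1 by simp
    ultimately show "n0 - (1 + \<Delta>) * z \<ge> h" using Z n0 by linarith
  }
qed

definition gc :: "'a set \<Rightarrow> ('a \<Rightarrow> 'a \<Rightarrow> bool) \<Rightarrow> 'a \<Rightarrow> 'a \<Rightarrow> bool" where
  "gc U EG = compl_edges U (induced_edges U EG)"

definition hasH :: "'a set \<Rightarrow> ('a \<Rightarrow> 'a \<Rightarrow> bool) \<Rightarrow> 'b set set \<Rightarrow> ('b \<Rightarrow> 'b \<Rightarrow> bool) \<Rightarrow> bool" where
  "hasH U EG Q EH = contains_copy U (gc U EG) (\<Union>Q) (induced_edges (\<Union>Q) EH)"

lemma gc_iff: "gc U EG x y \<longleftrightarrow> x \<in> U \<and> y \<in> U \<and> x \<noteq> y \<and> \<not> EG x y"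
  unfolding gc_def compl_edges_def induced_edges_def by auto

lemma hasH_mono: assumes "U \<subseteq> U'" "hasH U EG Q EH" shows "hasH U' EG Q EH"
proof -
  obtain f where f: "inj_on f (\<Union>Q)" "f ` (\<Union>Q) \<subseteq> U"
    "\<forall>x\<in>\<Union>Q. \<forall>y\<in>\<Union>Q. induced_edges (\<Union>Q) EH x y \<longrightarrow> gc U EG (f x) (f y)"
    using assms(2) unfolding hasH_def contains_copy_def by blast
  have "\<forall>x\<in>\<Union>Q. \<forall>y\<in>\<Union>Q. induced_edges (\<Union>Q) EH x y \<longrightarrow> gc U' EG (f x) (f y)"
    using f(3) assms(1) unfolding gc_iff by blast
  moreover have "f ` (\<Union>Q) \<subseteq> U'" using f(2) assms(1) by blast
  ultimately show ?thesis unfolding hasH_def contains_copy_def using f(1) by blast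
qed

lemma hasH_combine:
  assumes XY: "X \<inter> Y = {}" "X \<subseteq> V" "Y \<subseteq> V"
    and noedge: "\<And>x y. x \<in> X \<Longrightarrow> y \<in> Y \<Longrightarrow> \<not> EG x y \<and> \<not> EG y x"
    and h1: "hasH X EG Q1 EH" and h2: "hasH Y EG Q2 EH"
    and disj: "\<Union>Q1 \<inter> \<Union>Q2 = {}"
  shows "hasH V EG (Q1 \<union> Q2) EH"
proof -
  obtain f1 where f1: "inj_on f1 (\<Union>Q1)" "f1 ` (\<Union>Q1) \<subseteq> X"
    "\<forall>x\<in>\<Union>Q1. \<forall>y\<in>\<Union>Q1. induced_edges (\<Union>Q1) EH x y \<longrightarrow> gc X EG (f1 x) (f1 y)"
    using h1 unfolding hasH_def contains_copy_def by blast
  obtain f2 where f2: "inj_on f2 (\<Union>Q2)" "f2 ` (\<Union>Q2) \<subseteq> Y"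
    "\<forall>x\<in>\<Union>Q2. \<forall>y\<in>\<Union>Q2. induced_edges (\<Union>Q2) EH x y \<longrightarrow> gc Y EG (f2 x) (f2 y)"
    using h2 unfolding hasH_def contains_copy_def by blast
  define f where "f v = (if v \<in> \<Union>Q1 then f1 v else f2 v)" for v
  have fim: "f ` (\<Union>(Q1 \<union> Q2)) \<subseteq> V"
  proof
    fix z assume "z \<in> f ` (\<Union>(Q1 \<union> Q2))"
    then obtain v where v: "v \<in> \<Union>(Q1 \<union> Q2)" "z = f v" by blast
    show "z \<in> V"
    proof (cases "v \<in> \<Union>Q1")
      case True thus ?thesis using v f1(2) XY(2) unfolding f_def by auto
    next
      case False hence "v \<in> \<Union>Q2" using v by auto
      thus ?thesis using False v f2(2) XY(3) unfolding f_def by auto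
    qed
  qed
  have finj: "inj_on f (\<Union>(Q1 \<union> Q2))"
  proof (rule inj_onI)
    fix x y assume x: "x \<in> \<Union>(Q1 \<union> Q2)" and y: "y \<in> \<Union>(Q1 \<union> Q2)" and e: "f x = f y"
    show "x = y"
    proof (cases "x \<in> \<Union>Q1"; cases "y \<in> \<Union>Q1")
      assume "x \<in> \<Union>Q1" "y \<in> \<Union>Q1" thus ?thesis using e f1(1) unfolding f_def by (auto dest: inj_onD)
    next
      assume a: "x \<in> \<Union>Q1" "y \<notin> \<Union>Q1"
      hence "y \<in> \<Union>Q2" using y by auto
      hence "f y \<in> Y" using a f2(2) unfolding f_def by auto
      moreover have "f x \<in> X" using a f1(2) unfolding f_def by auto
      ultimately show ?thesis using e XY(1) by auto
    next
      assume a: "x \<notin> \<Union>Q1" "y \<in> \<Union>Q1"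
      hence "x \<in> \<Union>Q2" using x by auto
      hence "f x \<in> Y" using a f2(2) unfolding f_def by auto
      moreover have "f y \<in> X" using a f1(2) unfolding f_def by auto
      ultimately show ?thesis using e XY(1) by auto
    next
      assume a: "x \<notin> \<Union>Q1" "y \<notin> \<Union>Q1"
      hence "x \<in> \<Union>Q2" "y \<in> \<Union>Q2" using x y by auto
      thus ?thesis using a e f2(1) unfolding f_def by (auto dest: inj_onD)
    qed
  qed
  have fedge: "\<forall>x\<in>\<Union>(Q1 \<union> Q2). \<forall>y\<in>\<Union>(Q1 \<union> Q2). induced_edges (\<Union>(Q1 \<union> Q2)) EH x y \<longrightarrow> gc V EG (f x) (f y)"
  proof (intro ballI impI)
    fix x y assume x: "x \<in> \<Union>(Q1 \<union> Q2)" and y: "y \<in> \<Union>(Q1 \<union> Q2)" and ed: "induced_edges (\<Union>(Q1 \<union> Q2)) EH x y"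
    have E: "EH x y" using ed unfolding induced_edges_def by simp
    show "gc V EG (f x) (f y)"
    proof (cases "x \<in> \<Union>Q1"; cases "y \<in> \<Union>Q1")
      assume a: "x \<in> \<Union>Q1" "y \<in> \<Union>Q1"
      have "induced_edges (\<Union>Q1) EH x y" using a E unfolding induced_edges_def by simp
      hence "gc X EG (f1 x) (f1 y)" using f1(3) a by blast
      thus ?thesis using a XY unfolding f_def gc_iff by auto
    next
      assume a: "x \<in> \<Union>Q1" "y \<notin> \<Union>Q1"
      hence "y \<in> \<Union>Q2" using y by auto
      hence "f y \<in> Y" using a f2(2) unfolding f_def by auto
      moreover have "f x \<in> X" using a f1(2) unfolding f_def by auto
      ultimately show ?thesis using XY noedge[of "f x" "f y"] noedge[of "f y" "f x"] unfolding gc_iff by auto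
    next
      assume a: "x \<notin> \<Union>Q1" "y \<in> \<Union>Q1"
      hence "x \<in> \<Union>Q2" using x by auto
      hence "f x \<in> Y" using a f2(2) unfolding f_def by auto
      moreover have "f y \<in> X" using a f1(2) unfolding f_def by auto
      ultimately show ?thesis using XY noedge[of "f x" "f y"] noedge[of "f y" "f x"] unfolding gc_iff by auto
    next
      assume a: "x \<notin> \<Union>Q1" "y \<notin> \<Union>Q1"
      hence b: "x \<in> \<Union>Q2" "y \<in> \<Union>Q2" using x y by auto
      have "induced_edges (\<Union>Q2) EH x y" using b E unfolding induced_edges_def by simp
      hence "gc Y EG (f2 x) (f2 y)" using f2(3) b by blast
      thus ?thesis using a XY unfolding f_def gc_iff by auto
    qed
  qed
  show ?thesis unfolding hasH_def contains_copy_def using finj fim fedge by blast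
qed

lemma hasH_single:
  assumes "finite A" "finite X" "card A \<le> card X" and noE: "\<And>x y. x \<in> A \<Longrightarrow> y \<in> A \<Longrightarrow> \<not> EH x y"
  shows "hasH X EG {A} EH"
proof -
  obtain B where B: "B \<subseteq> X" "card B = card A" using assms(3) obtain_subset_with_card_n by metis
  have "finite B" using B assms(2) finite_subset by blast
  then obtain f where "bij_betw f A B" using B assms(1) by (metis finite_same_card_bij)
  hence "inj_on f A" "f ` A \<subseteq> X" using B unfolding bij_betw_def by auto
  thus ?thesis unfolding hasH_def contains_copy_def induced_edges_def using noE by auto
qed

lemma cm_E: "complete_multipartite VH EH P \<Longrightarrow> EH x y \<longleftrightarrow> (x \<in> VH \<and> y \<in> VH \<and> (\<forall>A\<in>P. \<not> (x \<in> A \<and> y \<in> A)))"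
  unfolding complete_multipartite_def by simp

lemma cm_noedge: assumes "complete_multipartite VH EH P" "A \<in> P" "x \<in> A" "y \<in> A" shows "\<not> EH x y"
proof
  assume "EH x y"
  hence "\<forall>A\<in>P. \<not> (x \<in> A \<and> y \<in> A)" using cm_E[OF assms(1)] by simp
  thus False using assms by blast
qed

lemma cm_edge:
  assumes cm: "complete_multipartite VH EH P" and AB: "A \<in> P" "B \<in> P" "A \<noteq> B" "x \<in> A" "y \<in> B"
  shows "EH x y"
proof -
  have d: "\<forall>A\<in>P. \<forall>B\<in>P. A \<noteq> B \<longrightarrow> A \<inter> B = {}" and V: "VH = \<Union>P"
    using cm unfolding complete_multipartite_def by auto
  have "\<forall>C\<in>P. \<not> (x \<in> C \<and> y \<in> C)"
  proof (intro ballI notI)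
    fix C assume C: "C \<in> P" "x \<in> C \<and> y \<in> C"
    have "C = A"
    proof (rule ccontr)
      assume "C \<noteq> A" hence "C \<inter> A = {}" using d C(1) AB(1) by blast
      thus False using C(2) AB(4) by blast
    qed
    moreover have "C = B"
    proof (rule ccontr)
      assume "C \<noteq> B" hence "C \<inter> B = {}" using d C(1) AB(2) by blast
      thus False using C(2) AB(5) by blast
    qed
    ultimately show False using AB by simp
  qed
  moreover have "x \<in> VH" "y \<in> VH" using V AB by auto
  ultimately show ?thesis using cm_E[OF cm] by simp
qed

lemma cm_finite_parts:
  assumes cm: "complete_multipartite VH EH P" and fin: "finite VH" and A: "A \<in> P"
  shows "finite A"
proof -
  have "A \<subseteq> VH" using cm A unfolding complete_multipartite_def by blast
  thus ?thesis using fin finite_subset by blast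
qed

lemma cm_card_Union:
  assumes cm: "complete_multipartite VH EH P" and fin: "finite VH" and Q: "Q \<subseteq> P"
  shows "card (\<Union>Q) = (\<Sum>A\<in>Q. card A)"
proof (rule card_Union_disjoint)
  have d: "\<forall>A\<in>P. \<forall>B\<in>P. A \<noteq> B \<longrightarrow> A \<inter> B = {}" using cm unfolding complete_multipartite_def by auto
  show "pairwise disjnt Q" unfolding pairwise_def disjnt_def using d Q by blast
  show "\<And>A. A \<in> Q \<Longrightarrow> finite A" using cm_finite_parts[OF cm fin] Q by blast
qed

lemma cm_chromatic:
  assumes cm: "complete_multipartite VH EH P" and Q: "Q \<subseteq> P"
  shows "chromatic_number (\<Union>Q) (induced_edges (\<Union>Q) EH) = card Q"
proof -
  have finP: "finite P" and neP: "{} \<notin> P" using cm unfolding complete_multipartite_def by auto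
  have finQ: "finite Q" using finP Q finite_subset by blast
  have ne: "{} \<notin> Q" using neP Q by blast
  define part where "part v = (SOME A. A \<in> Q \<and> v \<in> A)" for v
  have part: "v \<in> \<Union>Q \<Longrightarrow> part v \<in> Q \<and> v \<in> part v" for v
    unfolding part_def by (rule someI_ex) blast
  obtain g where g: "bij_betw g Q {0..<card Q}" using ex_bij_betw_finite_nat[OF finQ] by blast
  define col where "col v = g (part v)" for v
  have P1: "(\<forall>v\<in>\<Union>Q. col v < card Q) \<and> (\<forall>x\<in>\<Union>Q. \<forall>y\<in>\<Union>Q. induced_edges (\<Union>Q) EH x y \<longrightarrow> col x \<noteq> col y)"
  proof (intro conjI ballI impI)
    fix v assume "v \<in> \<Union>Q"
    hence "part v \<in> Q" using part by blast
    hence "g (part v) \<in> {0..<card Q}" using g unfolding bij_betw_def by blast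
    thus "col v < card Q" unfolding col_def by simp
  next
    fix x y assume x: "x \<in> \<Union>Q" and y: "y \<in> \<Union>Q" and e: "induced_edges (\<Union>Q) EH x y"
    show "col x \<noteq> col y"
    proof
      assume "col x = col y"
      hence "part x = part y" using part[OF x] part[OF y] g unfolding col_def bij_betw_def by (auto dest: inj_onD)
      hence "x \<in> part x" "y \<in> part x" "part x \<in> P" using part[OF x] part[OF y] Q by auto
      hence "\<not> EH x y" using cm_noedge[OF cm] by blast
      thus False using e unfolding induced_edges_def by simp
    qed
  qed
  have P2: "card Q \<le> k" if col': "\<forall>v\<in>\<Union>Q. col' v < k" "\<forall>x\<in>\<Union>Q. \<forall>y\<in>\<Union>Q. induced_edges (\<Union>Q) EH x y \<longrightarrow> col' x \<noteq> col' y"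
    for k and col' :: "'a \<Rightarrow> nat"
  proof -
    define rep where "rep A = (SOME v. v \<in> A)" for A :: "'a set"
    have rep: "A \<in> Q \<Longrightarrow> rep A \<in> A" for A unfolding rep_def using ne by (metis ex_in_conv someI_ex)
    have "inj_on (\<lambda>A. col' (rep A)) Q"
    proof (rule inj_onI, rule ccontr)
      fix A B assume A: "A \<in> Q" and B: "B \<in> Q" and eq: "col' (rep A) = col' (rep B)" and nAB: "A \<noteq> B"
      have "EH (rep A) (rep B)" using cm_edge[OF cm, of A B] A B nAB rep Q by blast
      hence "induced_edges (\<Union>Q) EH (rep A) (rep B)" using rep A B unfolding induced_edges_def by blast
      thus False using col'(2) rep A B eq by blast
    qed
    moreover have "(\<lambda>A. col' (rep A)) ` Q \<subseteq> {..<k}" using col'(1) rep by auto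
    ultimately show ?thesis using card_inj_on_le[of "\<lambda>A. col' (rep A)" Q "{..<k}"] by simp
  qed
  show ?thesis unfolding chromatic_number_def
  proof (rule Least_equality)
    show "\<exists>col :: 'a \<Rightarrow> nat. (\<forall>v\<in>\<Union>Q. col v < card Q) \<and> (\<forall>x\<in>\<Union>Q. \<forall>y\<in>\<Union>Q. induced_edges (\<Union>Q) EH x y \<longrightarrow> col x \<noteq> col y)"
      using P1 by blast
  next
    fix k assume "\<exists>col :: 'a \<Rightarrow> nat. (\<forall>v\<in>\<Union>Q. col v < k) \<and> (\<forall>x\<in>\<Union>Q. \<forall>y\<in>\<Union>Q. induced_edges (\<Union>Q) EH x y \<longrightarrow> col x \<noteq> col y)"
    thus "card Q \<le> k" using P2 by blast
  qed
qed

theorem lemma4p2: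
  fixes VH :: "'b set" and EH :: "'b \<Rightarrow> 'b \<Rightarrow> bool" and P :: "'b set set"
    and VG :: "'a set" and EG :: "'a \<Rightarrow> 'a \<Rightarrow> bool"
    and k :: nat and m \<beta> M \<Delta> :: real
  assumes k: "k \<ge> 2"
    and H: "graph VH EH" "complete_multipartite VH EH P" "card P = k"
    and m_def: "m = real (card VH) / real k"
    and params: "\<beta> \<ge> 1" "M \<ge> 1" "\<Delta> \<ge> 1" "M \<ge> 60 * \<beta>" "60 * \<beta> \<ge> 240 * \<Delta>"
      "M \<ge> 10 * \<beta> * \<Delta>" "M \<ge> 4 * real k" "\<beta> \<ge> 10 * ln (real k)"
    and G: "graph VG EG"
    and free: "H_free VG (compl_edges VG EG) VH EH"
    and size: "real (card VG) \<ge> M * m * real k * ln (real k)"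
  shows "\<exists>Q U. Q \<subseteq> P \<and> card Q \<ge> 2 \<and> U \<subseteq> VG \<and>
     (let VH' = \<Union>Q; EH' = induced_edges (\<Union>Q) EH;
          EF = induced_edges U EG;
          c = chromatic_number VH' EH' in
       H_free U (compl_edges U EF) VH' EH' \<and>
       M * real (card VH') * ln (real c) - mratio VH' EH' \<le> real (card U) \<and>
       real (card U) \<le> M * real (card VH') * ln (real c) \<and>
       expanding U EF \<Delta> \<beta> (mratio VH' EH') c)"
proof -
  have finVH: "finite VH" using H(1) unfolding graph_def by simp
  have finVG: "finite VG" using G unfolding graph_def by simp
  have finP: "finite P" and VHP: "VH = \<Union>P" and neP: "{} \<notin> P" using H(2) unfolding complete_multipartite_def by auto
  have EGsym: "\<And>x y. EG x y \<Longrightarrow> EG y x" and EGV: "\<And>x y. EG x y \<Longrightarrow> x \<in> VG \<and> y \<in> VG"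
    using G unfolding graph_def by auto
  have EHV: "\<And>x y. EH x y \<Longrightarrow> x \<in> VH \<and> y \<in> VH" using H(1) unfolding graph_def by auto
  have M240: "M \<ge> 240" using params by linarith
  define T where "T Q = M * real (card (\<Union>Q)) * ln (real (card Q))" for Q :: "'b set set"
  define good where "good Q \<longleftrightarrow> Q \<subseteq> P \<and> 2 \<le> card Q \<and> (\<exists>U \<subseteq> VG. \<not> hasH U EG Q EH \<and> real (card U) \<ge> T Q)" for Q
  have goodP: "good P"
  proof -
    have i1: "induced_edges (\<Union>P) EH = EH" using EHV VHP by (auto simp: induced_edges_def fun_eq_iff)
    have i2: "gc VG EG = compl_edges VG EG" using EGV by (auto simp: gc_def compl_edges_def induced_edges_def fun_eq_iff)
    have nh: "\<not> hasH VG EG P EH" using free unfolding hasH_def H_free_def i1 i2 VHP by simp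
    have kpos: "real k > 0" using k by simp
    have "T P = M * m * real k * ln (real k)" unfolding T_def m_def using H(3) VHP kpos by simp
    thus ?thesis unfolding good_def using nh size H(3) k by auto
  qed
  obtain Q where gQ: "good Q" and minQ: "\<And>Q'. good Q' \<Longrightarrow> card Q \<le> card Q'"
    using ex_has_least_nat[of good P card] goodP by blast
  define c where "c = card Q"
  have QP: "Q \<subseteq> P" and c2: "c \<ge> 2" using gQ unfolding good_def c_def by auto
  obtain U0 where U0: "U0 \<subseteq> VG" "\<not> hasH U0 EG Q EH" "real (card U0) \<ge> T Q"
    using gQ unfolding good_def by blast
  have finQ: "finite Q" using finP QP finite_subset by blast
  have partfin: "\<And>A. A \<in> Q \<Longrightarrow> finite A" using cm_finite_parts[OF H(2) finVH] QP by blast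
  have partne: "\<And>A. A \<in> Q \<Longrightarrow> A \<noteq> {}" using neP QP by blast
  have MIN: "\<And>Q' X. Q' \<subseteq> Q \<Longrightarrow> 2 \<le> card Q' \<Longrightarrow> card Q' < c \<Longrightarrow> X \<subseteq> VG \<Longrightarrow> real (card X) \<ge> T Q' \<Longrightarrow> hasH X EG Q' EH"
  proof (rule ccontr)
    fix Q' X assume a: "Q' \<subseteq> Q" "2 \<le> card Q'" "card Q' < c" "X \<subseteq> VG" "real (card X) \<ge> T Q'" "\<not> hasH X EG Q' EH"
    have "Q' \<subseteq> P" using a(1) QP by blast
    hence "good Q'" unfolding good_def using a(2,4,5,6) by blast
    hence "card Q \<le> card Q'" by (rule minQ)
    thus False using a(3) unfolding c_def by simp
  qed
  have SING: "\<And>A X. A \<in> Q \<Longrightarrow> finite X \<Longrightarrow> card A \<le> card X \<Longrightarrow> hasH X EG {A} EH"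
  proof -
    fix A and X :: "'a set" assume A: "A \<in> Q" and X: "finite X" "card A \<le> card X"
    have AP: "A \<in> P" using A QP by blast
    show "hasH X EG {A} EH"
      by (rule hasH_single) (use A X partfin cm_noedge[OF H(2) AP] in auto)
  qed
  obtain xs where xs: "set xs = Q" "distinct xs" using finite_distinct_list[OF finQ] by blast
  define ys where "ys = sort_key card xs"
  have ys: "set ys = Q" "distinct ys" "length ys = c" "sorted (map card ys)"
    unfolding ys_def c_def using xs by (auto simp: distinct_card[symmetric])
  define e where "e i = ys ! i" for i
  have ebij: "bij_betw e {..<c} Q" unfolding e_def using ys by (intro bij_betw_nth) auto
  have einj: "inj_on e {..<c}" and eimg: "e ` {..<c} = Q" using ebij unfolding bij_betw_def by auto
  have eQ: "\<And>i. i < c \<Longrightarrow> e i \<in> Q" using eimg by auto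
  have emono: "\<And>i i'. i \<le> i' \<Longrightarrow> i' < c \<Longrightarrow> card (e i) \<le> card (e i')"
  proof -
    fix i i' :: nat assume "i \<le> i'" "i' < c"
    hence "map card ys ! i \<le> map card ys ! i'" using ys by (intro sorted_nth_mono) auto
    thus "card (e i) \<le> card (e i')" using \<open>i \<le> i'\<close> \<open>i' < c\<close> ys unfolding e_def by simp
  qed
  define a where "a i = real (card (e i))" for i
  have amono: "\<And>i i'. i \<le> i' \<Longrightarrow> i' < c \<Longrightarrow> a i \<le> a i'" unfolding a_def using emono by simp
  have a1: "\<And>i. i < c \<Longrightarrow> a i \<ge> 1"
  proof -
    fix i assume "i < c"
    hence "finite (e i)" "e i \<noteq> {}" using eQ partfin partne by auto
    hence "card (e i) \<ge> 1" by (simp add: Suc_le_eq card_gt_0_iff)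
    thus "a i \<ge> 1" unfolding a_def by simp
  qed
  have cardI: "\<And>I. I \<subseteq> {..<c} \<Longrightarrow> card (e ` I) = card I"
    using einj by (meson card_image inj_on_subset)
  have cardU: "\<And>I. I \<subseteq> {..<c} \<Longrightarrow> real (card (\<Union>(e ` I))) = (\<Sum>i\<in>I. a i)"
  proof -
    fix I assume I: "I \<subseteq> {..<c}"
    have "e ` I \<subseteq> P" using I eQ QP by blast
    hence "card (\<Union>(e ` I)) = (\<Sum>A\<in>e ` I. card A)" using cm_card_Union[OF H(2) finVH] by blast
    also have "\<dots> = (\<Sum>i\<in>I. card (e i))" using inj_on_subset[OF einj I] by (simp add: sum.reindex)
    finally show "real (card (\<Union>(e ` I))) = (\<Sum>i\<in>I. a i)" unfolding a_def by simp
  qed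
  have TI: "\<And>I. I \<subseteq> {..<c} \<Longrightarrow> T (e ` I) = M * (\<Sum>i\<in>I. a i) * ln (real (card I))"
    unfolding T_def using cardU cardI by simp
  define h where "h = real (card (\<Union>Q))"
  have h_sum: "h = (\<Sum>i<c. a i)" unfolding h_def using cardU[of "{..<c}"] eimg by simp
  define d where "d = h / real c"
  have cpos: "real c > 0" using c2 by simp
  have a0d: "a 0 \<le> d"
  proof -
    have "(\<Sum>i<c. a 0) \<le> (\<Sum>i<c. a i)" using amono by (intro sum_mono) auto
    hence "real c * a 0 \<le> h" using h_sum by simp
    thus ?thesis unfolding d_def using cpos by (simp add: field_simps)
  qed
  have d1: "d \<ge> 1" using a0d a1[of 0] c2 by simp
  have hcd: "h = real c * d" unfolding d_def using cpos by simp
  define L where "L = ln (real c)"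
  have TQ: "T Q = M * h * L" unfolding T_def h_def L_def c_def by simp
  have h0: "h \<ge> 0" using hcd d1 cpos by simp
  have L0: "L \<ge> 0" unfolding L_def using c2 by simp
  have TQ0: "T Q \<ge> 0" unfolding TQ using M240 h0 L0 by simp
  define n0 where "n0 = nat \<lfloor>T Q\<rfloor>"
  have n0le: "real n0 \<le> T Q" unfolding n0_def using TQ0 by linarith
  have n0gt: "real n0 > T Q - 1" unfolding n0_def using TQ0 by linarith
  have "n0 \<le> card U0" using n0le U0(3) by linarith
  then obtain V0 where V0: "V0 \<subseteq> U0" "card V0 = n0" using obtain_subset_with_card_n by metis
  have V0G: "V0 \<subseteq> VG" using V0 U0 by blast
  have finV0: "finite V0" using V0G finVG finite_subset by blast
  have V0free: "\<not> hasH V0 EG Q EH" using hasH_mono[OF V0(1)] U0(2) by blast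
  define N where "N X = ext_nbhd V0 (induced_edges V0 EG) X" for X
  have finN: "\<And>X. finite (N X)" unfolding N_def ext_nbhd_def using finV0 by simp
  have NV0: "\<And>X. N X \<subseteq> V0 - X" unfolding N_def ext_nbhd_def by blast
  have Nedge: "\<And>X x y. x \<in> X \<Longrightarrow> X \<subseteq> V0 \<Longrightarrow> y \<in> V0 - X \<Longrightarrow> EG x y \<Longrightarrow> y \<in> N X"
    unfolding N_def ext_nbhd_def induced_edges_def by blast
  have Qsplit: "\<And>j. j \<le> c \<Longrightarrow> e ` {..<j} \<union> e ` {j..<c} = Q"
  proof -
    fix j assume "j \<le> c"
    hence "{..<j} \<union> {j..<c} = {..<c}" by auto
    thus "e ` {..<j} \<union> e ` {j..<c} = Q" using eimg by (metis image_Un)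
  qed
  have Udisj: "\<And>I J. I \<subseteq> {..<c} \<Longrightarrow> J \<subseteq> {..<c} \<Longrightarrow> I \<inter> J = {} \<Longrightarrow> \<Union>(e ` I) \<inter> \<Union>(e ` J) = {}"
  proof -
    fix I J assume I: "I \<subseteq> {..<c}" and J: "J \<subseteq> {..<c}" and IJ: "I \<inter> J = {}"
    have dP: "\<forall>A\<in>P. \<forall>B\<in>P. A \<noteq> B \<longrightarrow> A \<inter> B = {}" using H(2) unfolding complete_multipartite_def by auto
    show "\<Union>(e ` I) \<inter> \<Union>(e ` J) = {}"
    proof (rule ccontr)
      assume "\<Union>(e ` I) \<inter> \<Union>(e ` J) \<noteq> {}"
      then obtain i j x where ij: "i \<in> I" "j \<in> J" "x \<in> e i" "x \<in> e j" by blast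
      have "i \<noteq> j" using ij IJ by blast
      hence "e i \<noteq> e j" using einj ij I J by (meson inj_onD subsetD)
      moreover have "e i \<in> P" "e j \<in> P" using eQ ij I J QP by blast+
      ultimately have "e i \<inter> e j = {}" using dP by blast
      thus False using ij by blast
    qed
  qed
  have n0gt': "real n0 > M * h * ln (real c) - 1" using n0gt TQ L_def by simp
  have sum_rest: "(\<Sum>i\<in>{1..<c}. a i) = h - a 0"
  proof -
    have "{..<c} = insert 0 {1..<c}" using c2 by auto
    hence "h = a 0 + (\<Sum>i\<in>{1..<c}. a i)" using h_sum by simp
    thus ?thesis by simp
  qed
  have a_le_h: "\<And>i. i < c \<Longrightarrow> a i \<le> h"
  proof -
    fix i assume i: "i < c"
    have "(\<Sum>i\<in>{i}. a i) \<le> (\<Sum>i<c. a i)"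
    proof (rule sum_mono2)
      show "\<And>b. b \<in> {..<c} - {i} \<Longrightarrow> 0 \<le> a b" using a1 by (smt (verit) DiffD1 lessThan_iff)
    qed (use i in auto)
    thus "a i \<le> h" using h_sum by simp
  qed
  have LemA: "\<And>Z. Z \<subseteq> V0 \<Longrightarrow> card (e 0) \<le> card Z \<Longrightarrow> real (card Z) \<le> (1 + \<beta>) * d
      \<Longrightarrow> real (card (N Z)) \<le> \<Delta> * real (card Z) \<Longrightarrow> False"
  proof -
    fix Z assume Z: "Z \<subseteq> V0" "card (e 0) \<le> card Z" "real (card Z) \<le> (1 + \<beta>) * d"
      "real (card (N Z)) \<le> \<Delta> * real (card Z)"
    define W where "W = V0 - Z - N Z"
    have WV0: "W \<subseteq> V0" and ZW: "Z \<inter> W = {}" unfolding W_def by auto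
    have finZ: "finite Z" using Z(1) finV0 finite_subset by blast
    have finW: "finite W" using WV0 finV0 finite_subset by blast
    have "V0 \<subseteq> W \<union> Z \<union> N Z" unfolding W_def by blast
    hence "card V0 \<le> card (W \<union> Z \<union> N Z)" using finW finZ finN by (intro card_mono) auto
    also have "\<dots> \<le> card W + card Z + card (N Z)" by (meson card_Un_le add_le_mono order_trans le_refl)
    finally have "real n0 \<le> real (card W) + real (card Z) + real (card (N Z))" using V0(2) by linarith
    hence cW: "real (card W) \<ge> real n0 - (1 + \<Delta>) * real (card Z)" using Z(4) by (simp add: algebra_simps)
    have noE: "\<And>x y. x \<in> Z \<Longrightarrow> y \<in> W \<Longrightarrow> \<not> EG x y \<and> \<not> EG y x"
    proof -
      fix x y assume xy: "x \<in> Z" "y \<in> W"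
      have yV: "y \<in> V0 - Z" using xy unfolding W_def by blast
      have "\<not> EG x y"
      proof
        assume "EG x y"
        hence "y \<in> N Z" using Nedge[OF xy(1) Z(1) yV] by blast
        thus False using xy(2) unfolding W_def by blast
      qed
      thus "\<not> EG x y \<and> \<not> EG y x" using EGsym by blast
    qed
    have e0Q: "e 0 \<in> Q" using eQ c2 by simp
    have h1: "hasH Z EG {e 0} EH" using SING[OF e0Q finZ Z(2)] .
    have a00: "a 0 \<ge> 0" using a1[of 0] c2 by simp
    note NA = NUMA[of c \<beta> \<Delta> M d h "a 0" "real n0" "real (card Z)", OF c2 params(1) params(3) params(4) params(5) params(6) d1 hcd a00 n0gt' _ Z(3)]
    have h2: "hasH W EG (e ` {1..<c}) EH"
    proof (cases "c = 2")
      case True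
      have "{1..<c} = {1}" using True by auto
      hence img: "e ` {1..<c} = {e 1}" by simp
      have "real (card W) \<ge> h" using NA(2)[OF _ True] cW by simp
      moreover have "a 1 \<le> h" using a_le_h True by simp
      ultimately have "card (e 1) \<le> card W" unfolding a_def by simp
      thus ?thesis unfolding img using SING[OF eQ finW] True by simp
    next
      case False
      hence c3: "c \<ge> 3" using c2 by simp
      have sub: "{1..<c} \<subseteq> {..<c}" by auto
      have "real (card W) \<ge> T (e ` {1..<c})"
      proof -
        have "T (e ` {1..<c}) = M * (h - a 0) * ln (real c - 1)"
          using TI[OF sub] sum_rest cardI[OF sub] c3 by (simp add: of_nat_diff)
        thus ?thesis using NA(1)[OF _ c3] cW by simp
      qed
      moreover have "e ` {1..<c} \<subseteq> Q" using eQ by auto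
      moreover have "card (e ` {1..<c}) = c - 1" using cardI[OF sub] by simp
      ultimately show ?thesis using MIN[of "e ` {1..<c}" W] c3 WV0 V0G by auto
    qed
    have "\<Union>(e ` {0}) \<inter> \<Union>(e ` {1..<c}) = {}" using c2 by (intro Udisj) auto
    hence "\<Union>{e 0} \<inter> \<Union>(e ` {1..<c}) = {}" by simp
    hence "hasH V0 EG ({e 0} \<union> e ` {1..<c}) EH"
      using hasH_combine[OF ZW Z(1) WV0 noE h1 h2] by blast
    moreover have "{e 0} \<union> e ` {1..<c} = Q"
    proof -
      have "{..<1::nat} = {0}" by auto
      thus ?thesis using Qsplit[of 1] c2 by simp
    qed
    ultimately show False using V0free by simp
  qed
  define fam where "fam X \<longleftrightarrow> X \<subseteq> V0 \<and> card X < card (e 0) \<and> real (card (N X)) \<le> \<Delta> * real (card X)" for X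
  have fam0: "fam {}" unfolding fam_def using a1[of 0] c2 unfolding a_def N_def ext_nbhd_def by simp
  have "\<forall>y. fam y \<longrightarrow> card y < card (e 0)" unfolding fam_def by simp
  then obtain Ss where Ss: "fam Ss" and Smax0: "\<forall>Y. fam Y \<longrightarrow> card Y \<le> card Ss"
    using ex_has_greatest_nat[of fam "{}" card "card (e 0)", OF fam0] by blast
  have Smax: "\<And>Y. fam Y \<Longrightarrow> card Y \<le> card Ss" using Smax0 by blast
  have SsV0: "Ss \<subseteq> V0" and Sscard: "card Ss < card (e 0)" and SsN: "real (card (N Ss)) \<le> \<Delta> * real (card Ss)"
    using Ss unfolding fam_def by auto
  define F where "F = V0 - Ss"
  have FV0: "F \<subseteq> V0" unfolding F_def by blast
  have FG: "F \<subseteq> VG" using FV0 V0G by blast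
  have finF: "finite F" using FV0 finV0 finite_subset by blast
  have finSs: "finite Ss" using SsV0 finV0 finite_subset by blast
  have cardF: "card F = n0 - card Ss" unfolding F_def using SsV0 finSs V0(2) by (simp add: card_Diff_subset)
  have Ssle: "real (card Ss) \<le> d - 1" using Sscard a0d unfolding a_def by linarith
  have Fub: "real (card F) \<le> M * h * L"
    using cardF n0le TQ by (simp add: of_nat_diff)
  have Flb: "real (card F) \<ge> M * h * L - d"
  proof -
    have "card Ss \<le> n0" using SsV0 finV0 V0(2) card_mono by blast
    hence "real (card F) = real n0 - real (card Ss)" using cardF by (simp add: of_nat_diff)
    thus ?thesis using n0gt TQ Ssle by linarith
  qed
  have Ffree: "\<not> hasH F EG Q EH" using hasH_mono[OF FV0] V0free by blast
  have chi: "chromatic_number (\<Union>Q) (induced_edges (\<Union>Q) EH) = c"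
    unfolding c_def using cm_chromatic[OF H(2) QP] .
  have mr: "mratio (\<Union>Q) (induced_edges (\<Union>Q) EH) = d"
    unfolding mratio_def chi d_def h_def ..
  define EF where "EF = induced_edges F EG"
  have partA: "\<forall>S. S \<subseteq> F \<and> real (card S) \<le> \<beta> * d \<longrightarrow> real (card (ext_nbhd F EF S \<inter> F)) \<ge> \<Delta> * real (card S)"
  proof (intro allI impI, elim conjE)
    fix S assume S: "S \<subseteq> F" "real (card S) \<le> \<beta> * d"
    define NF where "NF = ext_nbhd F EF S"
    have NFF: "NF \<subseteq> F" unfolding NF_def ext_nbhd_def by blast
    have finNF: "finite NF" using NFF finF finite_subset by blast
    have finS: "finite S" using S(1) finF finite_subset by blast
    show "real (card (ext_nbhd F EF S \<inter> F)) \<ge> \<Delta> * real (card S)"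
    proof (rule ccontr)
      assume "\<not> ?thesis"
      hence lt: "real (card NF) < \<Delta> * real (card S)" using NFF unfolding NF_def by (simp add: Int_absorb2)
      have Sne: "card S \<ge> 1"
      proof (rule ccontr)
        assume "\<not> card S \<ge> 1" hence "card S = 0" by simp
        thus False using lt by simp
      qed
      define Z where "Z = Ss \<union> S"
      have ZV0: "Z \<subseteq> V0" unfolding Z_def using SsV0 S(1) FV0 by blast
      have SsS: "Ss \<inter> S = {}" using S(1) unfolding F_def by blast
      have cardZ: "card Z = card Ss + card S" unfolding Z_def using SsS finSs finS by (simp add: card_Un_disjoint)
      have NZsub: "N Z \<subseteq> N Ss \<union> NF"
      proof
        fix x assume x: "x \<in> N Z"
        hence xV: "x \<in> V0" "x \<notin> Z" and "\<exists>v\<in>Z. induced_edges V0 EG v x" unfolding N_def ext_nbhd_def by auto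
        then obtain v where v: "v \<in> Z" "EG v x" unfolding induced_edges_def by blast
        show "x \<in> N Ss \<union> NF"
        proof (cases "v \<in> Ss")
          case True
          have "x \<in> V0 - Ss" using xV unfolding Z_def by blast
          thus ?thesis using Nedge[OF True SsV0 _ v(2)] by blast
        next
          case False
          hence vS: "v \<in> S" using v(1) unfolding Z_def by blast
          have xF: "x \<in> F" "x \<notin> S" using xV unfolding Z_def F_def by auto
          have "EF v x" unfolding EF_def induced_edges_def using vS S(1) xF v(2) by blast
          hence "x \<in> NF" unfolding NF_def ext_nbhd_def using vS xF by blast
          thus ?thesis by blast
        qed
      qed
      have "card (N Z) \<le> card (N Ss \<union> NF)" using NZsub finN finNF by (intro card_mono) auto
      also have "\<dots> \<le> card (N Ss) + card NF" by (rule card_Un_le)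
      finally have "real (card (N Z)) \<le> real (card (N Ss)) + real (card NF)" by linarith
      hence NZ: "real (card (N Z)) \<le> \<Delta> * real (card Z)"
        using SsN lt cardZ by (simp add: algebra_simps)
      show False
      proof (cases "card Z < card (e 0)")
        case True
        hence "fam Z" unfolding fam_def using ZV0 NZ by blast
        hence "card Z \<le> card Ss" by (rule Smax)
        thus False using cardZ Sne by simp
      next
        case False
        have "real (card Z) \<le> (d - 1) + \<beta> * d" using cardZ Ssle S(2) by simp
        hence "real (card Z) \<le> (1 + \<beta>) * d" by (simp add: algebra_simps)
        thus False using LemA[OF ZV0 _ _ NZ] False by simp
      qed
    qed
  qed
  have partB: "\<forall>S. S \<subseteq> F \<and> \<beta> * d \<le> real (card S) \<and> real (card S) \<le> real (card F) / 2 \<longrightarrow>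
          real (card (ext_nbhd F EF S)) \<ge> real (card S) / (10 * ln (real c))"
  proof (intro allI impI, elim conjE)
    fix S assume S: "S \<subseteq> F" "\<beta> * d \<le> real (card S)" "real (card S) \<le> real (card F) / 2"
    define NF where "NF = ext_nbhd F EF S"
    define sr where "sr = real (card S)"
    define Fr where "Fr = real (card F)"
    have NFF: "NF \<subseteq> F" unfolding NF_def ext_nbhd_def by blast
    have finNF: "finite NF" using NFF finF finite_subset by blast
    have finS: "finite S" using S(1) finF finite_subset by blast
    have SG: "S \<subseteq> VG" using S(1) FG by blast
    show "real (card (ext_nbhd F EF S)) \<ge> real (card S) / (10 * ln (real c))"
    proof (rule ccontr)
      assume "\<not> ?thesis"
      hence lt: "real (card NF) < sr / (10 * L)" unfolding NF_def sr_def L_def by simp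
      define W where "W = F - S - NF"
      have WF: "W \<subseteq> F" and SW: "S \<inter> W = {}" unfolding W_def by auto
      have finW: "finite W" using WF finF finite_subset by blast
      have WG: "W \<subseteq> VG" using WF FG by blast
      have "F \<subseteq> W \<union> S \<union> NF" unfolding W_def by blast
      hence "card F \<le> card (W \<union> S \<union> NF)" using finW finS finNF by (intro card_mono) auto
      also have "\<dots> \<le> card W + card S + card NF" by (meson card_Un_le add_le_mono order_trans le_refl)
      finally have "Fr \<le> real (card W) + sr + real (card NF)" unfolding Fr_def sr_def by linarith
      moreover have "(1 + 1 / (10 * L)) * sr = sr + sr / (10 * L)" by (simp add: algebra_simps)
      ultimately have cW: "real (card W) > Fr - (1 + 1 / (10 * L)) * sr" using lt by linarith
      have noE: "\<And>x y. x \<in> S \<Longrightarrow> y \<in> W \<Longrightarrow> \<not> EG x y \<and> \<not> EG y x"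
      proof -
        fix x y assume xy: "x \<in> S" "y \<in> W"
        have yF: "y \<in> F" "y \<notin> S" "y \<notin> NF" using xy unfolding W_def by auto
        have "\<not> EG x y"
        proof
          assume "EG x y"
          hence "EF x y" unfolding EF_def induced_edges_def using xy(1) S(1) yF by blast
          hence "y \<in> NF" unfolding NF_def ext_nbhd_def using xy(1) yF by blast
          thus False using yF by blast
        qed
        thus "\<not> EG x y \<and> \<not> EG y x" using EGsym by blast
      qed
      have d0: "d \<ge> 0" using d1 by simp
      have s0: "sr \<ge> 0" unfolding sr_def by simp
      have dle: "d \<le> sr" using S(2) params(1) d0 unfolding sr_def
        by (meson mult_le_cancel_right1 order_trans not_le)
      define \<tau> where "\<tau> j = (if j = 1 then a 0 else M * (\<Sum>i<j. a i) * ln (real j))" for j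
      define J where "J = {j. 1 \<le> j \<and> j \<le> c - 1 \<and> \<tau> j \<le> sr}"
      have J1: "1 \<in> J" unfolding J_def \<tau>_def using c2 a0d dle by simp
      have finJ: "finite J" unfolding J_def by (rule finite_subset[of _ "{..c - 1}"]) auto
      define j where "j = Max J"
      have jJ: "j \<in> J" unfolding j_def using finJ J1 by (intro Max_in) auto
      have j1: "1 \<le> j" and jc: "j \<le> c - 1" and tj: "\<tau> j \<le> sr" using jJ unfolding J_def by auto
      have jmax: "\<And>j'. j' \<in> J \<Longrightarrow> j' \<le> j" unfolding j_def using finJ by simp
      have sub1: "{..<j} \<subseteq> {..<c}" using jc c2 by auto
      have sub2: "{j..<c} \<subseteq> {..<c}" by auto
      have hS: "hasH S EG (e ` {..<j}) EH"
      proof (cases "j = 1")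
        case True
        have "{..<j} = {0}" using True by auto
        hence img: "e ` {..<j} = {e 0}" by simp
        have "a 0 \<le> sr" using tj True unfolding \<tau>_def by simp
        hence "card (e 0) \<le> card S" unfolding a_def sr_def by simp
        thus ?thesis unfolding img using SING[OF eQ finS] c2 by simp
      next
        case False
        have "T (e ` {..<j}) = \<tau> j" unfolding \<tau>_def using TI[OF sub1] False by simp
        hence "real (card S) \<ge> T (e ` {..<j})" using tj unfolding sr_def by simp
        moreover have "card (e ` {..<j}) = j" using cardI[OF sub1] by simp
        moreover have "e ` {..<j} \<subseteq> Q" using eQ sub1 by auto
        ultimately show ?thesis using MIN[of "e ` {..<j}" S] False j1 jc c2 SG by auto
      qed
      have Lln2: "L \<ge> ln 2" unfolding L_def using c2 by simp
      have sF: "sr \<le> Fr / 2" using S(3) unfolding sr_def Fr_def .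
      have FlbF: "Fr \<ge> M * h * L - d" using Flb unfolding Fr_def .
      have hW: "hasH W EG (e ` {j..<c}) EH"
      proof (cases "j = c - 1")
        case True
        have "{j..<c} = {c - 1}" using True c2 by auto
        hence img: "e ` {j..<c} = {e (c - 1)}" by simp
        have dh: "d \<le> h" using hcd d0 c2 by (simp add: mult_le_cancel_right1)
        have "Fr - (1 + 1 / (10 * L)) * sr \<ge> h" using NUM1[OF M240 h0 dh Lln2 FlbF sF s0] .
        moreover have "a (c - 1) \<le> h" using a_le_h c2 by simp
        ultimately have "card (e (c - 1)) \<le> card W" using cW unfolding a_def by linarith
        thus ?thesis unfolding img using SING[OF eQ finW] c2 by simp
      next
        case False
        hence j1c: "j + 1 \<le> c - 1" using jc by simp
        have "j + 1 \<notin> J" using jmax by fastforce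
        hence "\<not> \<tau> (j + 1) \<le> sr" unfolding J_def using j1c by simp
        hence sX0: "sr < M * (\<Sum>i<j+1. a i) * ln (real (j + 1))" unfolding \<tau>_def using j1 by simp
        define r where "r = c - j"
        define p where "p = (\<Sum>i<j. a i)"
        define b where "b = a j"
        define R where "R = (\<Sum>i\<in>{j..<c}. a i)"
        have r2: "r \<ge> 2" unfolding r_def using j1c by simp
        have jr: "j + r = c" unfolding r_def using jc c2 by simp
        have p0: "p \<ge> 0" unfolding p_def
        proof (intro sum_nonneg)
          fix i assume "i \<in> {..<j}"
          hence "i < c" using jc c2 by auto
          thus "0 \<le> a i" using a1[of i] by linarith
        qed
        have "j < c" using jc c2 by simp
        hence b0: "b \<ge> 0" unfolding b_def using a1[of j] by linarith
        have sX: "sr < M * (p + b) * ln (real j + 1)" using sX0 unfolding p_def b_def by (simp add: add.commute)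
        have hpR: "h = p + R"
        proof -
          have "{..<c} = {..<j} \<union> {j..<c}" using jc by auto
          moreover have "{..<j} \<inter> {j..<c} = {}" by auto
          ultimately show ?thesis unfolding h_sum p_def R_def by (simp add: sum.union_disjoint)
        qed
        have rb: "real r * b \<le> R"
        proof -
          have "(\<Sum>i\<in>{j..<c}. b) \<le> R" unfolding R_def b_def using amono by (intro sum_mono) auto
          thus ?thesis unfolding r_def by simp
        qed
        have pjb: "p \<le> real j * b"
        proof -
          have "p \<le> (\<Sum>i<j. b)" unfolding p_def b_def using amono jc c2 by (intro sum_mono) auto
          thus ?thesis by simp
        qed
        have dr: "d * real r \<le> R"
        proof -
          have "p * real r \<le> (real j * b) * real r" using pjb by (intro mult_right_mono) auto
          also have "\<dots> = real j * (real r * b)" by simp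
          also have "\<dots> \<le> real j * R" using rb by (intro mult_left_mono) auto
          finally have "h * real r \<le> real c * R" unfolding hpR using jr[symmetric]
            by (simp add: algebra_simps)
          thus ?thesis unfolding d_def using cpos by (simp add: field_simps)
        qed
        have FB: "Fr \<ge> M * (p + R) * ln (real (j + r)) - d" using FlbF unfolding hpR jr L_def .
        have "Fr - (1 + 1 / (10 * ln (real (j + r)))) * sr \<ge> M * R * ln (real r)"
          using NUMB[OF j1 r2 M240 p0 b0 rb d0 dr FB sF sX] .
        hence "real (card W) \<ge> M * R * ln (real r)" using cW unfolding jr L_def by linarith
        moreover have "T (e ` {j..<c}) = M * R * ln (real r)" unfolding R_def r_def using TI[OF sub2] by simp
        moreover have "card (e ` {j..<c}) = r" using cardI[OF sub2] unfolding r_def by simp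
        moreover have "e ` {j..<c} \<subseteq> Q" using eQ by auto
        ultimately show ?thesis using MIN[of "e ` {j..<c}" W] r2 j1 jr WG by auto
      qed
      have "\<Union>(e ` {..<j}) \<inter> \<Union>(e ` {j..<c}) = {}" using sub1 sub2 by (intro Udisj) auto
      hence "hasH F EG (e ` {..<j} \<union> e ` {j..<c}) EH"
        using hasH_combine[OF SW S(1) WF noE hS hW] by blast
      moreover have "e ` {..<j} \<union> e ` {j..<c} = Q" using Qsplit jc c2 by simp
      ultimately show False using Ffree by simp
    qed
  qed
  have R1: "H_free F (compl_edges F (induced_edges F EG)) (\<Union>Q) (induced_edges (\<Union>Q) EH)"
    using Ffree unfolding H_free_def hasH_def gc_def .
  have R2: "M * real (card (\<Union>Q)) * ln (real c) - d \<le> real (card F)"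
    using Flb unfolding h_def L_def by simp
  have R3: "real (card F) \<le> M * real (card (\<Union>Q)) * ln (real c)"
    using Fub unfolding h_def L_def by simp
  have R4: "expanding F (induced_edges F EG) \<Delta> \<beta> d c"
    unfolding expanding_def expands_into_def using partA partB unfolding EF_def by blast
  show ?thesis
  proof (intro exI conjI)
    show "Q \<subseteq> P" by (rule QP)
    show "card Q \<ge> 2" using c2 unfolding c_def .
    show "F \<subseteq> VG" by (rule FG)
    show "let VH' = \<Union>Q; EH' = induced_edges (\<Union>Q) EH; EF = induced_edges F EG;
          c = chromatic_number VH' EH' in
       H_free F (compl_edges F EF) VH' EH' \<and>
       M * real (card VH') * ln (real c) - mratio VH' EH' \<le> real (card F) \<and>
       real (card F) \<le> M * real (card VH') * ln (real c) \<and>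
       expanding F EF \<Delta> \<beta> (mratio VH' EH') c"
      unfolding Let_def chi mr using R1 R2 R3 R4 by (intro conjI)
  qed
qed

end
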